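(* For all primes $p$, all integers $m_1,m_2,k$ and all integers $r\ge1$, $$\binom{p^rm_1+p^rm_2-k-1}{p^rm_1}\equiv\binom{p^{r-1}m_1+p^{r-1}m_2-\lfloor k/p\rfloor-1}{p^{r-1}m_1}\pmod{p^r}.$$
   Context: For all integers $n, k$, the binomial coefficient is defined by $\binom{n}{k} = \lim_{z \to 0} \frac{\Gamma(z+n+1)}{\Gamma(z+k+1)\Gamma(z+n-k+1)}$; this is a finite integer for all $n,k\in\mathbb{Z}$, agrees with the usual one for $n\ge0$, and satisfies $\binom{n}{k}=\binom{n}{n-k}$. $\lfloor x\rfloor$ denotes the floor function. *)

theory Defs
  imports Complex_Main "HOL-Number_Theory.Cong"
begin

text \<open>Binomial coefficient for all integers n, k, defined as the limit
  lim_{z->0} Gamma(z+n+1) / (Gamma(z+k+1) Gamma(z+n-k+1)).\<close>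

definition gbinom :: "int \<Rightarrow> int \<Rightarrow> int" where
  "gbinom n k =
     (if 0 \<le> n then (if 0 \<le> k \<and> k \<le> n then int (nat n choose nat k) else 0)
      else if 0 \<le> k then (-1) ^ nat k * int (nat (k - n - 1) choose nat k)
      else if k \<le> n then (-1) ^ nat (n - k) * int (nat (- k - 1) choose nat (n - k))
      else 0)"

end

theory Submission
  imports Defs "HOL-Computational_Algebra.Primes"
begin

definition ff :: "nat \<Rightarrow> int \<Rightarrow> int" where "ff p x = (if int p dvd x then 1 else x)"
definition gg :: "nat \<Rightarrow> int \<Rightarrow> int" where "gg p x = (if int p dvd x then x else 1)"
definition FF :: "nat \<Rightarrow> int \<Rightarrow> nat \<Rightarrow> int" where "FF p c j = (\<Prod>i=0..<j. ff p (c - int i))"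
definition GG :: "nat \<Rightarrow> int \<Rightarrow> nat \<Rightarrow> int" where "GG p c j = (\<Prod>i=0..<j. gg p (c - int i))"

lemma prod_split: "(\<Prod>i=0..<j. c - int i) = GG p c j * FF p c j"
  unfolding GG_def FF_def prod.distrib[symmetric]
  by (rule prod.cong) (auto simp: gg_def ff_def)

lemma div_pred_nd: "p > 0 \<Longrightarrow> \<not> int p dvd x \<Longrightarrow> (x - 1) div int p = x div int p"
proof -
  assume p: "p > 0" and nd: "\<not> int p dvd x"
  have m: "x mod int p \<noteq> 0" using nd by (simp add: dvd_eq_mod_eq_0)
  have m0: "x mod int p \<ge> 0" "x mod int p < int p" using p by auto
  have e: "x - 1 = (x mod int p - 1) + int p * (x div int p)" by simp
  have "(x - 1) div int p = (x mod int p - 1) div int p + x div int p"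
    unfolding e using p by simp
  also have "(x mod int p - 1) div int p = 0" using m m0 by simp
  finally show ?thesis by simp
qed
lemma div_pred_d: "p > 0 \<Longrightarrow> int p dvd x \<Longrightarrow> (x - 1) div int p = x div int p - 1"
proof -
  assume p: "p > 0" and d: "int p dvd x"
  then obtain m where x: "x = int p * m" by blast
  have e: "x - 1 = (int p - 1) + int p * (m - 1)" unfolding x by (simp add: algebra_simps)
  have "(x - 1) div int p = (int p - 1) div int p + (m - 1)" unfolding e using p by simp
  also have "(int p - 1) div int p = 0" using p by simp
  finally show ?thesis using p x by simp
qed

lemma GG_formula:
  assumes "p > 0"
  shows "GG p N j = int p ^ nat (N div p - (N - int j) div p) * (\<Prod>l=0..<nat (N div p - (N - int j) div p). N div p - int l)"
proof (induction j)
  case 0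
  then show ?case by (simp add: GG_def)
next
  case (Suc j)
  have mono: "(N - int j) div p \<le> N div p" by (rule zdiv_mono1) (use assms in auto)
  have GS: "GG p N (Suc j) = GG p N j * gg p (N - int j)" by (simp add: GG_def)
  show ?case
  proof (cases "int p dvd (N - int j)")
    case True
    have e: "(N - int (Suc j)) div p = (N - int j) div p - 1"
      using div_pred_d[OF assms True] by (simp add: algebra_simps)
    define c where "c = nat (N div p - (N - int j) div p)"
    have c2: "nat (N div p - (N - int (Suc j)) div p) = Suc c" using e mono by (simp add: c_def)
    have "N div p - int c = (N - int j) div p" using mono by (simp add: c_def)
    then have x: "gg p (N - int j) = int p * (N div p - int c)" using True by (simp add: gg_def)
    show ?thesis unfolding GS Suc c2 c_def[symmetric] x by simp
  next
    case False
    have e: "(N - int (Suc j)) div p = (N - int j) div p"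
      using div_pred_nd[OF assms False] by (simp add: algebra_simps)
    show ?thesis unfolding GS Suc e using False by (simp add: gg_def)
  qed
qed


lemma ff_coprime: "prime p \<Longrightarrow> coprime (ff p x) (int p ^ r)"
proof -
  assume p: "prime p"
  have "coprime (ff p x) (int p)"
  proof (cases "int p dvd x")
    case False
    have pi: "prime (int p)" using p by simp
    have "coprime (int p) x" using prime_imp_coprime[OF pi False] .
    then show ?thesis using False by (simp add: ff_def coprime_commute)
  qed (simp add: ff_def)
  then show ?thesis by simp
qed

lemma FF_coprime: "prime p \<Longrightarrow> coprime (FF p c j) (int p ^ r)"
  unfolding FF_def by (rule prod_coprime_left) (rule ff_coprime)

lemma ff_cong: "int p dvd q \<Longrightarrow> [x = y] (mod q) \<Longrightarrow> [ff p x = ff p y] (mod q)"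
proof -
  assume d: "int p dvd q" and c: "[x = y] (mod q)"
  have "[x = y] (mod int p)" using c d by (rule cong_dvd_modulus)
  then have "int p dvd x \<longleftrightarrow> int p dvd y" by (rule cong_dvd_iff)
  then show ?thesis using c by (simp add: ff_def)
qed

lemma fact_split: "(fact j :: int) = (\<Prod>i=0..<j. int j - int i)"
proof -
  have "(fact j :: int) = of_nat (\<Prod>i = 0..<j. j - i)" by (rule fact_prod_rev)
  also have "\<dots> = (\<Prod>i=0..<j. int j - int i)" by (simp add: of_nat_prod of_nat_diff)
  finally show ?thesis .
qed

lemma main:
  fixes N A X Y :: int and p t j u s r :: nat
  assumes p: "prime p" and N: "N = int p * A + int s" and j: "j = p * t + u"
    and us: "u \<le> s" and sp: "s < p"
    and X: "fact j * X = (\<Prod>i=0..<j. N - int i)"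
    and Y: "fact t * Y = (\<Prod>i=0..<t. A - int i)"
    and F: "[FF p N j = FF p (int j) j] (mod int p ^ r)"
  shows "[X = Y] (mod int p ^ r)"
proof -
  have p0: "p > 0" using p prime_gt_0_nat by blast
  have d1: "N div int p = A" unfolding N using sp by simp
  have d2: "(N - int j) div int p = A - int t"
  proof -
    have "N - int j = int (s - u) + int p * (A - int t)" unfolding N j using us by (simp add: algebra_simps of_nat_diff)
    moreover have "int (s - u) div int p = 0" using sp us by simp
    ultimately show ?thesis using p0 by simp
  qed
  have d3: "int j div int p = int t"
  proof -
    have "int j = int u + int p * int t" unfolding j by simp
    moreover have "int u div int p = 0" using sp us by simp
    ultimately show ?thesis using p0 by simp
  qed
  have d4: "(int j - int j) div int p = 0" by simp
  have GN: "GG p N j = int p ^ t * (\<Prod>l=0..<t. A - int l)"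
    using GG_formula[OF p0, of N j] unfolding d1 d2 by simp
  have Gj: "GG p (int j) j = int p ^ t * (\<Prod>l=0..<t. int t - int l)"
    using GG_formula[OF p0, of "int j" j] unfolding d3 d4 by simp
  have ft: "(\<Prod>l=0..<t. int t - int l) = fact t" using fact_split by simp
  have fj: "fact j = int p ^ t * fact t * FF p (int j) j"
    using fact_split[of j] prod_split[of "int j" j p] Gj ft by simp
  have "int p ^ t * fact t * (FF p (int j) j * X) = int p ^ t * fact t * (Y * FF p N j)"
  proof -
    have "int p ^ t * fact t * (FF p (int j) j * X) = fact j * X" using fj by (simp add: ac_simps)
    also have "\<dots> = GG p N j * FF p N j" using X prod_split by simp
    also have "\<dots> = int p ^ t * (fact t * Y) * FF p N j" using GN Y by simp
    finally show ?thesis by (simp add: ac_simps)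
  qed
  moreover have nz: "int p ^ t * fact t \<noteq> (0::int)" using p0 by simp
  ultimately have eq: "FF p (int j) j * X = Y * FF p N j" using mult_left_cancel[OF nz] by simp
  have c1: "[Y * FF p N j = Y * FF p (int j) j] (mod int p ^ r)" using F by (rule cong_scalar_left)
  have c2: "[FF p (int j) j * X = FF p (int j) j * Y] (mod int p ^ r)"
    using c1 unfolding eq by (simp add: mult.commute)
  have cop: "coprime (FF p (int j) j) (int p ^ r)" by (rule FF_coprime[OF p])
  show ?thesis using iffD1[OF cong_mult_lcancel[OF cop] c2] .
qed


lemma FF_step:
  assumes p: "prime p" and d1: "int p ^ r dvd int L" and d2: "int p dvd int L"
  shows "[FF p (c+1) L = FF p c L] (mod int p ^ r)"
proof (cases L)
  case 0
  then show ?thesis by (simp add: FF_def)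
next
  case (Suc M)
  define P where "P = (\<Prod>i=0..<M. ff p (c - int i))"
  have e1: "FF p (c+1) L = ff p (c+1) * P"
    unfolding FF_def Suc P_def prod.atLeast0_lessThan_Suc_shift by simp
  have e2: "FF p c L = P * ff p (c - int M)"
    unfolding FF_def Suc P_def prod.atLeast0_lessThan_Suc by simp
  have cq: "[c - int M = c + 1] (mod int p ^ r)"
  proof -
    have eq: "c + 1 - (c - int M) = int L" using Suc by simp
    have "[c + 1 = c - int M] (mod int p ^ r)" using d1 by (simp only: cong_iff_dvd_diff eq)
    then show ?thesis by (rule cong_sym)
  qed
  have cg: "[ff p (c - int M) = ff p (c + 1)] (mod int p ^ r)"
  proof -
    have "[c - int M = c + 1] (mod int p)"
    proof -
      have eq: "c + 1 - (c - int M) = int L" using Suc by simp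
      have "[c + 1 = c - int M] (mod int p)" using d2 by (simp only: cong_iff_dvd_diff eq)
      then show ?thesis by (rule cong_sym)
    qed
    then have "int p dvd (c - int M) \<longleftrightarrow> int p dvd (c + 1)" by (rule cong_dvd_iff)
    then show ?thesis using cq by (simp add: ff_def)
  qed
  have "[ff p (c - int M) * FF p (c+1) L = ff p (c - int M) * FF p c L] (mod int p ^ r)"
  proof -
    have "ff p (c - int M) * FF p (c+1) L = ff p (c+1) * FF p c L" unfolding e1 e2 by (simp add: ac_simps)
    moreover have "[ff p (c+1) * FF p c L = ff p (c - int M) * FF p c L] (mod int p ^ r)"
      using cong_scalar_right[OF cong_sym[OF cg]] .
    ultimately show ?thesis by simp
  qed
  note cc = this
  have cop: "coprime (ff p (c - int M)) (int p ^ r)" by (rule ff_coprime[OF p])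
  show ?thesis using iffD1[OF cong_mult_lcancel[OF cop] cc] .
qed

lemma FF_shift:
  assumes p: "prime p" and d1: "int p ^ r dvd int L" and d2: "int p dvd int L"
  shows "[FF p c L = FF p 0 L] (mod int p ^ r)"
proof -
  have pos: "[FF p (int n) L = FF p 0 L] (mod int p ^ r)" for n
  proof (induction n)
    case (Suc n)
    have "[FF p (int n + 1) L = FF p (int n) L] (mod int p ^ r)" by (rule FF_step[OF assms])
    then have "[FF p (int (Suc n)) L = FF p (int n) L] (mod int p ^ r)" by (simp add: add.commute)
    then show ?case using Suc.IH by (rule cong_trans)
  qed simp
  have neg: "[FF p (- int n) L = FF p 0 L] (mod int p ^ r)" for n
  proof (induction n)
    case (Suc n)
    have "[FF p (- int (Suc n) + 1) L = FF p (- int (Suc n)) L] (mod int p ^ r)"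
      by (rule FF_step[OF assms])
    moreover have "- int (Suc n) + 1 = - int n" by simp
    ultimately have "[FF p (- int n) L = FF p (- int (Suc n)) L] (mod int p ^ r)" by simp
    then show ?case using Suc.IH by (metis cong_sym cong_trans)
  qed simp
  show ?thesis
  proof (cases "c \<ge> 0")
    case True
    then show ?thesis using pos[of "nat c"] by simp
  next
    case False
    then show ?thesis using neg[of "nat (-c)"] by simp
  qed
qed

lemma gb1: "k \<ge> 0 \<Longrightarrow> real_of_int (gbinom n k) = (real_of_int n) gchoose (nat k)"
proof -
  assume k: "k \<ge> 0"
  show ?thesis
  proof (cases "n \<ge> 0")
    case True
    have "(real_of_int n) gchoose (nat k) = real (nat n choose nat k)"
      using binomial_gbinomial[of "nat n" "nat k", where 'a=real] True by simp
    then show ?thesis using True k by (simp add: gbinom_def)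
  next
    case False
    have "(real_of_int n) gchoose (nat k) = (-1) ^ nat k * ((of_nat (nat k) - real_of_int n - 1) gchoose nat k)"
      by (rule gbinomial_negated_upper)
    also have "of_nat (nat k) - real_of_int n - 1 = real (nat (k - n - 1))" using k False by simp
    also have "(real (nat (k - n - 1)) gchoose nat k) = real (nat (k - n - 1) choose nat k)"
      by (simp add: binomial_gbinomial)
    finally show ?thesis using False k by (simp add: gbinom_def)
  qed
qed

lemma gb2: "n < 0 \<Longrightarrow> k \<le> n \<Longrightarrow> real_of_int (gbinom n k) = (real_of_int n) gchoose (nat (n - k))"
proof -
  assume n: "n < 0" and k: "k \<le> n"
  have "(real_of_int n) gchoose (nat (n-k)) = (-1) ^ nat (n-k) * ((of_nat (nat (n-k)) - real_of_int n - 1) gchoose nat (n-k))"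
    by (rule gbinomial_negated_upper)
  also have "of_nat (nat (n-k)) - real_of_int n - 1 = real (nat (- k - 1))" using k n by simp
  also have "(real (nat (- k - 1)) gchoose nat (n-k)) = real (nat (- k - 1) choose nat (n-k))"
    by (simp add: binomial_gbinomial)
  finally show ?thesis using n k by (simp add: gbinom_def)
qed

lemma gbfact:
  assumes "real_of_int X = (real_of_int n) gchoose j"
  shows "fact j * X = (\<Prod>i=0..<j. n - int i)"
proof -
  have "real_of_int (fact j * X) = fact j * ((real_of_int n) gchoose j)" using assms by simp
  also have "\<dots> = (\<Prod>i=0..<j. real_of_int n - of_nat i)" by (rule gbinomial_mult_fact)
  also have "\<dots> = real_of_int (\<Prod>i=0..<j. n - int i)" by simp
  finally show ?thesis by (simp only: of_int_eq_iff)
qed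


lemma reduce:
  fixes A B :: int and s p r :: nat
  assumes p: "prime p" and r: "r \<ge> 1" and sp: "s < p" and dB: "int p ^ r dvd int p * B"
  shows "[gbinom (int p * A + int s) (int p * B) = gbinom A B] (mod int p ^ r)"
proof -
  have p0: "p > 0" using p prime_gt_0_nat by blast
  define N where "N = int p * A + int s"
  show ?thesis
  proof (cases "B \<ge> 0")
    case True
    define t where "t = nat B"
    define j where "j = p * t"
    have B: "B = int t" using True by (simp add: t_def)
    have X: "fact j * gbinom N (int p * B) = (\<Prod>i=0..<j. N - int i)"
      by (rule gbfact) (simp add: gb1 True B j_def nat_mult_distrib)
    have Y: "fact t * gbinom A B = (\<Prod>i=0..<t. A - int i)"
      by (rule gbfact) (simp add: gb1 True t_def)
    have dj1: "int p ^ r dvd int j" using dB by (simp add: j_def B)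
    have dj2: "int p dvd int j" by (simp add: j_def)
    have F: "[FF p N j = FF p (int j) j] (mod int p ^ r)"
      using cong_trans[OF FF_shift[OF p dj1 dj2, of N] cong_sym[OF FF_shift[OF p dj1 dj2, of "int j"]]] .
    show ?thesis using main[OF p N_def, of j t 0, OF _ _ sp X Y F] j_def N_def by simp
  next
    case False
    show ?thesis
    proof (cases "N \<ge> 0")
      case True
      have "A \<ge> 0"
      proof (rule ccontr)
        assume "\<not> A \<ge> 0"
        then have "A \<le> -1" by simp
        then have "int p * A \<le> int p * (-1)" by (rule mult_left_mono) simp
        then have "int p * A \<le> - int p" by simp
        then show False using True sp unfolding N_def by simp
      qed
      moreover have "int p * B < 0" using False p0 by (simp add: mult_pos_neg)
      ultimately show ?thesis using True False unfolding N_def[symmetric] by (simp add: gbinom_def)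
    next
      case Nn: False
      have A0: "A < 0"
      proof (rule ccontr)
        assume "\<not> A < 0"
        then have "int p * A \<ge> 0" by simp
        then show False using Nn unfolding N_def by simp
      qed
      have K0: "int p * B < 0" using False p0 by (simp add: mult_pos_neg)
      show ?thesis
      proof (cases "int p * B \<le> N")
        case False2: False
        have "B > A"
        proof (rule ccontr)
          assume "\<not> B > A"
          then have "int p * B \<le> int p * A" using p0 by (simp add: mult_le_cancel_left)
          then show False using False2 unfolding N_def by simp
        qed
        then show ?thesis using Nn False2 A0 K0 False unfolding N_def[symmetric] by (simp add: gbinom_def)
      next
        case True
        have BA: "B \<le> A"
        proof (rule ccontr)
          assume "\<not> B \<le> A"
          then have "B \<ge> A + 1" by simp
          then have "int p * B \<ge> int p * (A + 1)" using p0 by (simp add: mult_le_cancel_left)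
          then show False using True sp unfolding N_def by (simp add: algebra_simps)
        qed
        define t where "t = nat (A - B)"
        define j where "j = p * t + s"
        have jN: "int j = N - int p * B" unfolding j_def t_def N_def using BA by (simp add: algebra_simps)
        have X: "fact j * gbinom N (int p * B) = (\<Prod>i=0..<j. N - int i)"
        proof (rule gbfact)
          have "nat (N - int p * B) = j" using jN by simp
          then show "real_of_int (gbinom N (int p * B)) = real_of_int N gchoose j"
            using gb2[of N "int p * B"] Nn True by simp
        qed
        have Y: "fact t * gbinom A B = (\<Prod>i=0..<t. A - int i)"
          by (rule gbfact) (simp add: gb2 A0 BA t_def)
        have F: "[FF p N j = FF p (int j) j] (mod int p ^ r)"
          unfolding FF_def
        proof (rule cong_prod)
          fix i assume "i \<in> {0..<j}"
          have "[N - int i = int j - int i] (mod int p ^ r)"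
            unfolding cong_iff_dvd_diff using dB jN by simp
          moreover have "int p dvd int p ^ r" using r by (simp add: dvd_power)
          ultimately show "[ff p (N - int i) = ff p (int j - int i)] (mod int p ^ r)"
            by (rule ff_cong[rotated])
        qed
        show ?thesis using main[OF p N_def j_def _ sp X Y F] unfolding N_def by simp
      qed
    qed
  qed
qed

theorem lemma5p5:
  fixes p r :: nat and m1 m2 k :: int
  assumes "prime p" and "r \<ge> 1"
  shows "[gbinom (int p ^ r * m1 + int p ^ r * m2 - k - 1) (int p ^ r * m1)
          = gbinom (int p ^ (r - 1) * m1 + int p ^ (r - 1) * m2 - \<lfloor>real_of_int k / real p\<rfloor> - 1)
                   (int p ^ (r - 1) * m1)] (mod int p ^ r)"
proof -
  have p0: "p > 0" using assms(1) prime_gt_0_nat by blast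
  define Q where "Q = int p ^ (r - 1)"
  have q: "int p ^ r = int p * Q" unfolding Q_def using assms(2)
    by (metis Suc_diff_le diff_Suc_1 power_Suc)
  have fl: "\<lfloor>real_of_int k / real p\<rfloor> = k div int p"
    using floor_divide_of_int_eq[of k "int p"] by simp
  define A where "A = Q * m1 + Q * m2 - k div int p - 1"
  define s where "s = nat (int p - 1 - k mod int p)"
  have km: "k mod int p \<ge> 0" "k mod int p < int p" using p0 by auto
  have sp: "s < p" using km p0 unfolding s_def by linarith
  have N: "int p ^ r * m1 + int p ^ r * m2 - k - 1 = int p * A + int s"
  proof -
    have "k = int p * (k div int p) + k mod int p" by simp
    then show ?thesis unfolding q A_def s_def using km by (simp add: algebra_simps)
  qed
  have K: "int p ^ r * m1 = int p * (Q * m1)" unfolding q by simp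
  have dB: "int p ^ r dvd int p * (Q * m1)" unfolding q by simp
  show ?thesis unfolding N unfolding K fl Q_def[symmetric] A_def[symmetric]
    by (rule reduce[OF assms sp dB])
qed

end
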